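(* For ${\bf n}>0$, the infimum $\inf_{p:\,\mathbb E_p[N]\le{\bf n}}J_-(p)$ over probability distributions $p$ on $\mathbb N_0$ is attained by the geometric distribution $p_k^{\mathrm{geo},{\bf n}}=(1-r)r^k$ with $r={\bf n}/({\bf n}+1)$, and $$\inf_{p:\,\mathbb E_p[N]\le{\bf n}}J_-(p)=-2{\bf n}\log\Big(1+\frac1{\bf n}\Big).$$
   Context: The classical pure-death generator acts on probability distributions $p=(p_n)_{n\in\mathbb N_0}$ by $(\mathcal C_-(p))_n=-np_n+(n+1)p_{n+1}$. $J_-(p)=2\frac{d}{dt}\big|_{t=0}H(e^{t\mathcal C_-}(p))$ with $H(p)=-\sum_np_n\log p_n$, and $\mathbb E_p[N]=\sum_n np_n$. *)

theory Defs
  imports Complex_Main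
begin

definition prob_dist :: "(nat \<Rightarrow> real) \<Rightarrow> bool" where
  "prob_dist p \<longleftrightarrow> (\<forall>n. 0 \<le> p n) \<and> p sums 1"

definition finite_mean :: "(nat \<Rightarrow> real) \<Rightarrow> bool" where
  "finite_mean p \<longleftrightarrow> summable (\<lambda>n. real n * p n)"

definition mean_N :: "(nat \<Rightarrow> real) \<Rightarrow> real" where
  "mean_N p = (\<Sum>n. real n * p n)"

definition entropy :: "(nat \<Rightarrow> real) \<Rightarrow> real" where
  "entropy p = - (\<Sum>n. (if p n = 0 then 0 else p n * ln (p n)))"

definition Cminus :: "(nat \<Rightarrow> real) \<Rightarrow> nat \<Rightarrow> real" where
  "Cminus p n = - real n * p n + real (n + 1) * p (n + 1)"

text \<open>The semigroup e^{t C_-} (t \<ge> 0), written explicitly as binomial thinning with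
  survival probability e^{-t}:
  (e^{t C_-} p)_n = sum_{m} p_{n+m} binom(n+m,n) e^{-n t} (1 - e^{-t})^m.\<close>
definition death_semigroup :: "real \<Rightarrow> (nat \<Rightarrow> real) \<Rightarrow> nat \<Rightarrow> real" where
  "death_semigroup t p n =
     (\<Sum>m. p (n + m) * real ((n + m) choose n) * exp (- t * real n) * (1 - exp (- t)) ^ m)"

text \<open>has_Jminus p J: J_-(p) = 2 d/dt|_{t=0} H(e^{t C_-} p) exists and equals J
  (derivative from the right, as the semigroup is indexed by t \<ge> 0).\<close>
definition has_Jminus :: "(nat \<Rightarrow> real) \<Rightarrow> real \<Rightarrow> bool" where
  "has_Jminus p J \<longleftrightarrow>
     ((\<lambda>t. entropy (death_semigroup t p)) has_real_derivative (J / 2)) (at_right 0)"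

definition geo_dist :: "real \<Rightarrow> nat \<Rightarrow> real" where
  "geo_dist nn k = (1 - nn / (nn + 1)) * (nn / (nn + 1)) ^ k"

end

theory Submission
  imports Defs "HOL-Analysis.Analysis"
begin

lemma bij_tri: "bij_betw (\<lambda>(n::nat, m::nat). (n + m, n)) (UNIV \<times> UNIV) (Sigma UNIV atMost)"
proof (rule bij_betwI')
  fix x y :: "nat \<times> nat" show "((case x of (n, m) \<Rightarrow> (n + m, n)) = (case y of (n, m) \<Rightarrow> (n + m, n))) = (x = y)"
    by (cases x; cases y) auto
next
  fix x :: "nat \<times> nat" show "(case x of (n, m) \<Rightarrow> (n + m, n)) \<in> Sigma UNIV atMost" by (cases x) auto
next
  fix y :: "nat \<times> nat" assume "y \<in> Sigma UNIV atMost"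
  then obtain k n where "y = (k,n)" "n \<le> k" by auto
  thus "\<exists>x\<in>UNIV \<times> UNIV. y = (case x of (n, m) \<Rightarrow> (n + m, n))"
    by (intro bexI[of _ "(n, k-n)"]) auto
qed

lemma tri_swap:
  fixes a :: "nat \<Rightarrow> nat \<Rightarrow> real"
  assumes nonneg: "\<And>k n. 0 \<le> a k n"
    and summ: "summable (\<lambda>k. \<Sum>n\<le>k. a k n)"
  shows "(\<forall>n. summable (\<lambda>m. a (n+m) n))
       \<and> (\<lambda>n. \<Sum>m. a (n+m) n) sums (\<Sum>k. \<Sum>n\<le>k. a k n)"
proof -
  define c where "c = (\<lambda>k. \<Sum>n\<le>k. a k n)"
  define S where "S = (\<Sum>k. c k)"
  have cs: "(c has_sum S) UNIV"
    unfolding S_def using summ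
    by (intro sums_nonneg_imp_has_sum) (auto simp: c_def sums_iff intro: sum_nonneg nonneg)
  have rows: "((\<lambda>n. a k n) has_sum c k) {..k}" for k
    unfolding c_def by (intro has_sum_finiteI) auto
  have fs: "(\<lambda>(k,n). a k n) summable_on Sigma UNIV atMost"
    using summable_on_SigmaI[where A=UNIV and f="\<lambda>(k,n). a k n" and g=c and B=atMost] rows cs nonneg
    by (auto simp: summable_on_def)
  have fh: "((\<lambda>(k,n). a k n) has_sum S) (Sigma UNIV atMost)"
    by (rule has_sum_SigmaI[OF _ cs fs]) (use rows in auto)
  have bij: "bij_betw (\<lambda>(n::nat, m::nat). (n + m, n)) (UNIV \<times> UNIV) (Sigma UNIV atMost)"
    by (rule bij_tri)
  have gh: "((\<lambda>(n,m). a (n+m) n) has_sum S) (UNIV \<times> UNIV)"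
    using has_sum_reindex_bij_betw[OF bij, of "\<lambda>(k,n). a k n" S] fh
    by (simp add: case_prod_unfold)
  have rs: "(\<lambda>m. a (n+m) n) summable_on UNIV" for n
    using summable_on_SigmaD1[of "\<lambda>n m. a (n+m) n" UNIV "\<lambda>_. UNIV" n] gh
    by (auto simp: summable_on_def)
  have rsum: "summable (\<lambda>m. a (n+m) n)" for n
    using rs summable_on_imp_summable by blast
  have rh: "((\<lambda>m. a (n+m) n) has_sum (\<Sum>m. a (n+m) n)) UNIV" for n
    using rsum[of n] nonneg by (intro sums_nonneg_imp_has_sum) (auto simp: sums_iff)
  have "((\<lambda>n. \<Sum>m. a (n+m) n) has_sum S) UNIV"
    by (rule has_sum_SigmaD[OF gh]) (use rh in auto)
  hence "(\<lambda>n. \<Sum>m. a (n+m) n) sums S" by (rule has_sum_imp_sums)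
  thus ?thesis using rsum by (simp add: S_def c_def)
qed


lemma binom_one:
  fixes s :: real
  shows "(\<Sum>n\<le>k. real (k choose n) * s^n * (1-s)^(k-n)) = 1"
  using binomial_ring[of s "1-s" k] by simp

lemma binom_mean:
  fixes s :: real
  shows "(\<Sum>n\<le>k. real n * (real (k choose n) * s^n * (1-s)^(k-n))) = real k * s"
proof (cases k)
  case 0 then show ?thesis by simp
next
  case (Suc j)
  have "(\<Sum>n\<le>Suc j. real n * (real (Suc j choose n) * s^n * (1-s)^(Suc j-n)))
      = (\<Sum>i\<le>j. real (Suc i) * (real (Suc j choose Suc i) * s^Suc i * (1-s)^(j-i)))"
    by (subst sum.atMost_Suc_shift) simp
  also have "\<dots> = (\<Sum>i\<le>j. real (Suc j) * s * (real (j choose i) * s^i * (1-s)^(j-i)))"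
  proof (intro sum.cong refl)
    fix i assume "i \<in> {..j}"
    have "real (Suc i) * real (Suc j choose Suc i) = real (Suc j) * real (j choose i)"
      using Suc_times_binomial[of i j] by (metis of_nat_mult)
    have "real (Suc i) * (real (Suc j choose Suc i) * s ^ Suc i * (1 - s) ^ (j - i))
        = (real (Suc i) * real (Suc j choose Suc i)) * (s * s ^ i * (1 - s) ^ (j - i))"
      by (simp only: power_Suc mult_ac)
    also have "\<dots> = real (Suc j) * s * (real (j choose i) * s ^ i * (1 - s) ^ (j - i))"
      by (simp only: \<open>real (Suc i) * real (Suc j choose Suc i) = real (Suc j) * real (j choose i)\<close> mult_ac)
    finally show "real (Suc i) * (real (Suc j choose Suc i) * s ^ Suc i * (1 - s) ^ (j - i)) =
          real (Suc j) * s * (real (j choose i) * s ^ i * (1 - s) ^ (j - i))" .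
  qed
  also have "\<dots> = real (Suc j) * s"
    by (simp add: sum_distrib_left[symmetric] binom_one)
  finally show ?thesis using Suc by simp
qed

lemma negbin_sums:
  fixes x :: real
  assumes "0 \<le> x" "x < 1"
  shows "(\<lambda>m. real ((n+m) choose n) * x^m) sums (1 / (1-x)^(n+1))"
proof -
  have "\<bar>-x\<bar> < 1" using assms by simp
  from gen_binomial_real[OF this, of "- real (n+1)"]
  have "(\<lambda>m. (- real (n+1) gchoose m) * (-x)^m) sums (1 + - x) powr (- real (n+1))" .
  moreover have "(- real (n+1) gchoose m) * (-x)^m = real ((n+m) choose n) * x^m" for m
  proof -
    have "(- real (n+1) gchoose m) = (-1)^m * ((real m + real (n+1) - 1) gchoose m)"
      by (subst gbinomial_negated_upper) simp
    also have "(real m + real (n+1) - 1) = real (n+m)" by simp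
    also have "(real (n+m) gchoose m) = real ((n+m) choose m)"
      by (simp add: binomial_gbinomial)
    also have "(n+m) choose m = (n+m) choose n"
      using binomial_symmetric[of m "n+m"] by simp
    finally show ?thesis by (simp add: power_minus' mult_ac)
  qed
  moreover have "(1 + - x) powr (- real (n+1)) = 1 / (1-x)^(n+1)"
  proof -
    have "(1 + - x) powr (- real (n+1)) = (1-x) powr (- real (n+1))" by simp
    also have "\<dots> = inverse ((1-x) powr real (n+1))" by (rule powr_minus)
    finally have "(1 + - x) powr (- real (n+1)) = inverse ((1-x) powr real (n+1))" .
    also have "(1-x) powr real (n+1) = (1-x)^(n+1)"
      using assms by (intro powr_realpow) simp
    finally show ?thesis by (simp add: divide_inverse)
  qed
  ultimately show ?thesis by simp
qed



definition Tsg :: "real \<Rightarrow> (nat \<Rightarrow> real) \<Rightarrow> nat \<Rightarrow> real" where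
  "Tsg s p n = (\<Sum>m. p (n + m) * real ((n + m) choose n) * s ^ n * (1 - s) ^ m)"

lemma ds_eq: "death_semigroup t p = Tsg (exp (- t)) p"
proof (rule ext)
  fix n
  have "exp (- t * real n) = exp (- t) ^ n"
    using exp_of_nat_mult[of n "-t"] by (simp add: mult.commute)
  thus "death_semigroup t p n = Tsg (exp (- t)) p n"
    unfolding death_semigroup_def Tsg_def by simp
qed

lemma prob_le1:
  assumes "prob_dist p" shows "p n \<le> 1"
proof -
  have s: "summable p" and nn: "\<And>n. 0 \<le> p n" and one: "suminf p = 1"
    using assms by (auto simp: prob_dist_def sums_iff)
  have "sum p {n} \<le> suminf p" by (rule sum_le_suminf[OF s]) (auto simp: nn)
  thus ?thesis using one by simp
qed

lemma T_rows:
  assumes "prob_dist p" "0 \<le> s" "s \<le> 1"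
  shows "summable (\<lambda>m. p (n + m) * real ((n + m) choose n) * s ^ n * (1 - s) ^ m)"
    and "Tsg s p sums 1"
proof -
  define a where "a = (\<lambda>k n. p k * (real (k choose n) * s ^ n * (1 - s) ^ (k - n)))"
  have nn: "0 \<le> a k n" for k n
    using assms unfolding a_def prob_dist_def by auto
  have rs: "(\<Sum>n\<le>k. a k n) = p k" for k
    unfolding a_def by (simp add: sum_distrib_left[symmetric] binom_one)
  have ps: "p sums 1" using assms by (simp add: prob_dist_def)
  have su: "summable (\<lambda>k. \<Sum>n\<le>k. a k n)" unfolding rs using ps by (simp add: sums_iff)
  have eq: "a (n + m) n = p (n + m) * real ((n + m) choose n) * s ^ n * (1 - s) ^ m" for n m
    unfolding a_def by (simp add: mult_ac)
  from tri_swap[OF nn su] ps show "summable (\<lambda>m. p (n + m) * real ((n + m) choose n) * s ^ n * (1 - s) ^ m)"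
    and "Tsg s p sums 1"
    unfolding eq rs Tsg_def by (auto simp: sums_iff)
qed

lemma T_props:
  assumes "prob_dist p" "finite_mean p" "0 \<le> s" "s \<le> 1"
  shows "prob_dist (Tsg s p) \<and> finite_mean (Tsg s p) \<and> mean_N (Tsg s p) = s * mean_N p"
proof -
  have nnp: "0 \<le> p n" for n using assms by (auto simp: prob_dist_def)
  have nnT: "0 \<le> Tsg s p n" for n
    unfolding Tsg_def using T_rows(1)[OF assms(1,3,4)] assms(3,4) nnp
    by (intro suminf_nonneg) auto
  define a where "a = (\<lambda>k n. real n * (p k * (real (k choose n) * s ^ n * (1 - s) ^ (k - n))))"
  have nn: "0 \<le> a k n" for k n
    using assms nnp unfolding a_def by auto
  have rs: "(\<Sum>n\<le>k. a k n) = s * (real k * p k)" for k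
  proof -
    have "(\<Sum>n\<le>k. a k n) = p k * (\<Sum>n\<le>k. real n * (real (k choose n) * s ^ n * (1 - s) ^ (k - n)))"
      unfolding a_def by (simp add: sum_distrib_left mult_ac)
    thus ?thesis by (simp add: binom_mean)
  qed
  have fm: "summable (\<lambda>k. real k * p k)" using assms by (simp add: finite_mean_def)
  have su: "summable (\<lambda>k. \<Sum>n\<le>k. a k n)" unfolding rs using fm by (rule summable_mult)
  have eq: "(\<Sum>m. a (n + m) n) = real n * Tsg s p n" for n
  proof -
    have "(\<Sum>m. a (n + m) n) = (\<Sum>m. real n * (p (n + m) * real ((n + m) choose n) * s ^ n * (1 - s) ^ m))"
      unfolding a_def by (simp add: mult_ac)
    also have "\<dots> = real n * Tsg s p n"
      unfolding Tsg_def by (rule suminf_mult[OF T_rows(1)[OF assms(1,3,4)]])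
    finally show ?thesis .
  qed
  from tri_swap[OF nn su] have "(\<lambda>n. real n * Tsg s p n) sums (\<Sum>k. s * (real k * p k))"
    unfolding eq rs by simp
  moreover have "(\<Sum>k. s * (real k * p k)) = s * mean_N p"
    unfolding mean_N_def by (rule suminf_mult[OF fm])
  ultimately show ?thesis
    using T_rows(2)[OF assms(1,3,4)] nnT
    by (auto simp: prob_dist_def finite_mean_def mean_N_def sums_iff)
qed

lemma T_one: "Tsg 1 p = p"
proof (rule ext)
  fix n
  have "(\<lambda>m. p (n + m) * real ((n + m) choose n) * 1 ^ n * (1 - 1) ^ m) = (\<lambda>m. if m = 0 then p n else 0)"
    by (auto simp: fun_eq_iff)
  thus "Tsg 1 p n = p n" unfolding Tsg_def using sums_single[of 0 "\<lambda>_. p n"]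
    by (simp add: sums_iff)
qed

lemma geo_alt: "m > 0 \<Longrightarrow> geo_dist m n = m ^ n / (m + 1) ^ (n + 1)"
  unfolding geo_dist_def by (simp add: field_simps power_divide)

lemma geo_pos: "m > 0 \<Longrightarrow> geo_dist m n > 0"
  by (simp add: geo_alt)

lemma canc: "(c::real) \<noteq> 0 \<Longrightarrow> A \<noteq> 0 \<Longrightarrow> (1/c)*(X/A)*((c*A)/B) = X/B"
  by (simp add: field_simps)

lemma T_geo:
  assumes "m > 0" "0 < s" "s \<le> 1"
  shows "Tsg s (geo_dist m) = geo_dist (m * s)"
proof (rule ext)
  fix n
  define r where "r = m / (m + 1)"
  have r: "0 < r" "r < 1" using assms by (auto simp: r_def field_simps)
  have x: "0 \<le> r * (1 - s)" "r * (1 - s) < 1" using r assms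
    by (auto simp: mult_le_one intro: le_less_trans[of _ r] mult_left_le)
  have "(\<lambda>j. ((1 - r) * (r * s) ^ n) * (real ((n + j) choose n) * (r * (1 - s)) ^ j))
      sums (((1 - r) * (r * s) ^ n) * (1 / (1 - r * (1 - s)) ^ (n + 1)))"
    by (rule sums_mult[OF negbin_sums[OF x]])
  moreover have "((1 - r) * (r * s) ^ n) * (real ((n + j) choose n) * (r * (1 - s)) ^ j)
     = geo_dist m (n + j) * real ((n + j) choose n) * s ^ n * (1 - s) ^ j" for j
    unfolding geo_dist_def r_def[symmetric] by (simp add: power_add power_mult_distrib mult_ac)
  moreover have "((1 - r) * (r * s) ^ n) * (1 / (1 - r * (1 - s)) ^ (n + 1)) = geo_dist (m * s) n"
  proof -
    have "1 - r = 1 / (m + 1)" using assms by (simp add: r_def field_simps)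
    moreover have "1 - r * (1 - s) = (1 + m * s) / (m + 1)" using assms by (simp add: r_def field_simps)
    moreover have "(r * s) ^ n = (m * s) ^ n / (m + 1) ^ n" by (simp add: r_def power_divide)
    ultimately have "((1 - r) * (r * s) ^ n) * (1 / (1 - r * (1 - s)) ^ (n + 1))
        = (1 / (m + 1)) * ((m * s) ^ n / (m + 1) ^ n) * ((m + 1) ^ (n + 1) / (1 + m * s) ^ (n + 1))"
      by (simp add: power_divide)
    also have "\<dots> = (1 / (m + 1)) * ((m * s) ^ n / (m + 1) ^ n) * (((m + 1) * (m + 1) ^ n) / (1 + m * s) ^ (n + 1))"
      by simp
    also have "\<dots> = (m * s) ^ n / (m * s + 1) ^ (n + 1)"
      using assms by (subst canc) (auto simp: add.commute)
    also have "\<dots> = geo_dist (m * s) n" using assms by (simp add: geo_alt)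
    finally show ?thesis .
  qed
  ultimately show "Tsg s (geo_dist m) n = geo_dist (m * s) n"
    unfolding Tsg_def by (simp add: sums_iff)
qed



definition psi :: "real \<Rightarrow> real" where "psi y = y * ln y - y + 1"

lemma psi_tangent:
  assumes "0 < a" "0 \<le> y"
  shows "psi a + ln a * (y - a) \<le> psi y"
proof (cases "y = 0")
  case True thus ?thesis using assms by (simp add: psi_def)
next
  case False
  hence y: "0 < y" using assms by simp
  have "ln (a / y) \<le> a / y - 1" using ln_le_minus_one[of "a/y"] assms y by simp
  hence "ln a - ln y \<le> a / y - 1" using assms y by (simp add: ln_div)
  hence "y * (ln a - ln y) \<le> y * (a / y - 1)" using y by (intro mult_left_mono) auto
  moreover have "y * (a / y - 1) = a - y" using y by (simp add: right_diff_distrib)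
  ultimately have "y * (ln a - ln y) \<le> a - y" by simp
  thus ?thesis unfolding psi_def by (simp add: algebra_simps)
qed

lemma psi_nonneg: "0 \<le> y \<Longrightarrow> 0 \<le> psi y"
  using psi_tangent[of 1 y] by (simp add: psi_def)

lemma psi_one: "psi 1 = 0" by (simp add: psi_def)
lemma psi_zero: "psi 0 = 1" by (simp add: psi_def)

lemma jensen_psi:
  assumes w: "\<And>j. 0 \<le> w j" and y: "\<And>j. 0 \<le> y j"
    and W: "w sums W" and Wp: "W > 0"
    and A: "(\<lambda>j. w j * y j) sums A"
    and B: "(\<lambda>j. w j * psi (y j)) sums B"
  shows "W * psi (A / W) \<le> B"
proof -
  have A0: "0 \<le> A" using A w y by (intro sums_le[OF _ sums_zero A]) auto
  show ?thesis
  proof (cases "A = 0")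
    case True
    have "\<forall>j. w j * y j = 0"
      using A True w y by (subst suminf_eq_zero_iff[symmetric]) (auto simp: sums_iff)
    hence "w j * psi (y j) = w j" for j
      by (cases "w j = 0") (auto simp: psi_zero)
    hence "(\<lambda>j. w j * psi (y j)) = w" by (intro ext)
    hence "B = W" using B W sums_unique2 by metis
    thus ?thesis using True by (simp add: psi_zero)
  next
    case False
    define a where "a = A / W"
    have a: "0 < a" using A0 False Wp by (simp add: a_def)
    have S1: "(\<lambda>j. w j * psi a + ln a * (w j * y j - a * w j)) sums (W * psi a + ln a * (A - a * W))"
      by (intro sums_add sums_mult sums_diff W A sums_mult2)
    have S2: "w j * psi a + ln a * (w j * y j - a * w j) \<le> w j * psi (y j)" for j
    proof -
      have "w j * (psi a + ln a * (y j - a)) \<le> w j * psi (y j)"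
        by (intro mult_left_mono psi_tangent a y w)
      thus ?thesis by (simp add: algebra_simps)
    qed
    have "W * psi a + ln a * (A - a * W) \<le> B" by (rule sums_le[OF S2 S1 B])
    moreover have "A - a * W = 0" using Wp by (simp add: a_def)
    ultimately show ?thesis by (simp add: a_def)
  qed
qed



lemma ln_geo: "m > 0 \<Longrightarrow> ln (geo_dist m n) = real n * ln m - real (n + 1) * ln (m + 1)"
proof -
  assume m: "m > 0"
  have "ln (geo_dist m n) = ln (m ^ n) - ln ((m + 1) ^ (n + 1))"
    using m unfolding geo_alt[OF m] by (intro ln_divide_pos) auto
  also have "\<dots> = real n * ln m - real (n + 1) * ln (m + 1)"
    using m by (subst (1 2) ln_realpow) auto
  finally show ?thesis .
qed

lemma geo_sums: "m > 0 \<Longrightarrow> geo_dist m sums 1"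
proof -
  assume m: "m > 0"
  define r where "r = m / (m + 1)"
  have r: "0 < r" "r < 1" using m by (auto simp: r_def field_simps)
  have "(\<lambda>n. (1 - r) * r ^ n) sums ((1 - r) * (1 / (1 - r)))"
    by (intro sums_mult geometric_sums) (use r in auto)
  thus ?thesis using r unfolding geo_dist_def r_def[symmetric] by simp
qed

lemma ent_rel:
  assumes m: "m > 0" and q: "prob_dist q" "finite_mean q"
  shows "summable (\<lambda>n. geo_dist m n * psi (q n / geo_dist m n))"
    and "entropy q = - (\<Sum>n. geo_dist m n * psi (q n / geo_dist m n)) + ln (m + 1) + mean_N q * ln (1 + 1 / m)"
proof -
  define G where "G = geo_dist m"
  define d where "d = (\<lambda>n. G n * psi (q n / G n))"
  define h where "h = (\<lambda>n. q n * ln (q n))"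
  define e where "e = (\<lambda>n. q n * ln (m + 1) + (real n * q n) * (ln (m + 1) - ln m) - q n + G n)"
  have Gp: "G n > 0" for n using geo_pos[OF m] by (simp add: G_def)
  have qn: "0 \<le> q n" for n using q by (auto simp: prob_dist_def)
  have qs: "q sums 1" using q by (auto simp: prob_dist_def)
  have fm: "summable (\<lambda>n. real n * q n)" using q by (simp add: finite_mean_def)
  have Gs: "G sums 1" using geo_sums[OF m] by (simp add: G_def)
  have de: "d n = h n + e n" for n
  proof (cases "q n = 0")
    case True thus ?thesis by (simp add: d_def h_def e_def psi_zero)
  next
    case False
    hence qp: "q n > 0" using qn[of n] by simp
    have "d n = q n * ln (q n / G n) - q n + G n"
      unfolding d_def psi_def using Gp[of n] by (simp add: field_simps)
    also have "ln (q n / G n) = ln (q n) - (real n * ln m - real (n + 1) * ln (m + 1))"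
      using qp Gp[of n] ln_geo[OF m, of n] by (simp add: ln_div G_def)
    finally show ?thesis by (simp add: h_def e_def algebra_simps)
  qed
  have es: "e sums (ln (m + 1) + mean_N q * (ln (m + 1) - ln m) - 1 + 1)"
  proof -
    have "(\<lambda>n. q n * ln (m + 1)) sums ln (m + 1)" using sums_mult2[OF qs] by simp
    thus ?thesis unfolding e_def mean_N_def
      by (intro sums_add sums_diff sums_mult2 Gs qs summable_sums fm)
  qed
  define b where "b = (\<lambda>n. q n * \<bar>ln (m + 1)\<bar> + (real n * q n) * \<bar>ln (m + 1) - ln m\<bar> + q n + G n)"
  have bs: "summable b" unfolding b_def
    by (intro summable_add summable_mult2 fm sums_summable[OF qs] sums_summable[OF Gs])
  have hle: "h n \<le> 0" for n
  proof -
    have "q n \<le> 1" by (rule prob_le1[OF q(1)])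
    hence "ln (q n) \<le> 0" by (cases "q n = 0") (use qn[of n] in auto)
    thus ?thesis unfolding h_def using qn[of n] by (simp add: mult_nonneg_nonpos)
  qed
  have eb: "e n \<le> b n" for n
  proof -
    have "q n * ln (m + 1) \<le> q n * \<bar>ln (m + 1)\<bar>" using qn[of n] by (intro mult_left_mono) auto
    moreover have "(real n * q n) * (ln (m + 1) - ln m) \<le> (real n * q n) * \<bar>ln (m + 1) - ln m\<bar>"
      using qn[of n] by (intro mult_left_mono) auto
    moreover have "- q n \<le> q n" using qn[of n] by simp
    ultimately show ?thesis unfolding e_def b_def by linarith
  qed
  have dn: "0 \<le> d n" for n unfolding d_def using Gp[of n] qn[of n]
    by (intro mult_nonneg_nonneg psi_nonneg) auto
  have ds: "summable d"
  proof (rule summableI_nonneg_bounded[where x="suminf b"])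
    fix N
    have "(\<Sum>i<N. d i) \<le> (\<Sum>i<N. b i)"
    proof (intro sum_mono)
      fix i show "d i \<le> b i" using de[of i] hle[of i] eb[of i] by linarith
    qed
    also have "\<dots> \<le> suminf b"
    proof (rule sum_le_suminf[OF bs])
      fix n show "0 \<le> b n" unfolding b_def using qn[of n] Gp[of n]
        by (intro add_nonneg_nonneg mult_nonneg_nonneg) auto
    qed simp
    finally show "(\<Sum>i<N. d i) \<le> suminf b" .
  qed (rule dn)
  thus "summable (\<lambda>n. geo_dist m n * psi (q n / geo_dist m n))" by (simp add: d_def G_def)
  have hsum: "h sums (suminf d - (ln (m + 1) + mean_N q * (ln (m + 1) - ln m) - 1 + 1))"
  proof -
    have "(\<lambda>n. d n - e n) sums (suminf d - (ln (m + 1) + mean_N q * (ln (m + 1) - ln m) - 1 + 1))"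
      by (intro sums_diff summable_sums ds es)
    moreover have "(\<lambda>n. d n - e n) = h" using de by (auto simp: fun_eq_iff)
    ultimately show ?thesis by simp
  qed
  have ent: "entropy q = - suminf h"
    unfolding entropy_def h_def by (rule arg_cong[where f="\<lambda>x. - x"], rule suminf_cong) simp
  have l: "ln (1 + 1 / m) = ln (m + 1) - ln m"
  proof -
    have "1 + 1 / m = (m + 1) / m" using m by (simp add: field_simps)
    thus ?thesis using m by (simp add: ln_div)
  qed
  show "entropy q = - (\<Sum>n. geo_dist m n * psi (q n / geo_dist m n)) + ln (m + 1) + mean_N q * ln (1 + 1 / m)"
    unfolding ent l using hsum by (simp add: sums_iff d_def G_def)
qed



lemma geo_prob: "m > 0 \<Longrightarrow> prob_dist (geo_dist m)"
  unfolding prob_dist_def using geo_sums[of m] geo_pos[of m] by (auto intro: less_imp_le)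

lemma DP:
  assumes m: "m > 0" and s: "0 < s" "s \<le> 1" and p: "prob_dist p" "finite_mean p"
  shows "(\<Sum>n. geo_dist (m * s) n * psi (Tsg s p n / geo_dist (m * s) n))
         \<le> (\<Sum>k. geo_dist m k * psi (p k / geo_dist m k))"
proof -
  define G where "G = geo_dist m"
  define G' where "G' = geo_dist (m * s)"
  define x where "x = (\<lambda>k. p k / G k)"
  define K where "K = (\<lambda>k n. real (k choose n) * s ^ n * (1 - s) ^ (k - n))"
  define a where "a = (\<lambda>k n. (G k * psi (x k)) * K k n)"
  have Gp: "G k > 0" for k using geo_pos[OF m] by (simp add: G_def)
  have pn: "0 \<le> p k" for k using p by (auto simp: prob_dist_def)
  have xn: "0 \<le> x k" for k using Gp[of k] pn[of k] by (simp add: x_def)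
  have Kn: "0 \<le> K k n" for k n using s by (simp add: K_def)
  have an: "0 \<le> a k n" for k n unfolding a_def
    using Gp[of k] xn[of k] Kn[of k n] psi_nonneg[of "x k"] by simp
  have rs: "(\<Sum>n\<le>k. a k n) = G k * psi (x k)" for k
    unfolding a_def K_def by (simp add: sum_distrib_left[symmetric] binom_one)
  have D0s: "summable (\<lambda>k. G k * psi (x k))"
    using ent_rel(1)[OF m p] by (simp add: G_def x_def)
  have su: "summable (\<lambda>k. \<Sum>n\<le>k. a k n)" unfolding rs by (rule D0s)
  note TS = tri_swap[OF an su]
  have Kshift: "K (n + j) n = real ((n + j) choose n) * s ^ n * (1 - s) ^ j" for n j
    by (simp add: K_def)
  have pt: "G' n * psi (Tsg s p n / G' n) \<le> (\<Sum>j. a (n + j) n)" for n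
  proof -
    define w where "w = (\<lambda>j. G (n + j) * K (n + j) n)"
    define y where "y = (\<lambda>j. x (n + j))"
    have W: "w sums G' n"
    proof -
      have "summable (\<lambda>j. G (n + j) * real ((n + j) choose n) * s ^ n * (1 - s) ^ j)"
        using T_rows(1)[OF geo_prob[OF m], of s n] s by (simp add: G_def)
      moreover have "Tsg s G n = G' n" using T_geo[OF m s] by (simp add: G_def G'_def)
      ultimately show ?thesis unfolding w_def Kshift Tsg_def
        by (simp add: sums_iff mult_ac)
    qed
    have A: "(\<lambda>j. w j * y j) sums Tsg s p n"
    proof -
      have "summable (\<lambda>j. p (n + j) * real ((n + j) choose n) * s ^ n * (1 - s) ^ j)"
        using T_rows(1)[OF p(1), of s n] s by simp
      moreover have "w j * y j = p (n + j) * real ((n + j) choose n) * s ^ n * (1 - s) ^ j" for j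
        unfolding w_def y_def x_def Kshift using Gp[of "n+j"] by (simp add: field_simps)
      ultimately show ?thesis unfolding Tsg_def by (simp add: sums_iff)
    qed
    have B: "(\<lambda>j. w j * psi (y j)) sums (\<Sum>j. a (n + j) n)"
    proof -
      have "(\<lambda>j. w j * psi (y j)) = (\<lambda>j. a (n + j) n)"
        unfolding w_def y_def a_def by (auto simp: mult_ac)
      thus ?thesis using TS by (simp add: summable_sums)
    qed
    have wn: "0 \<le> w j" for j unfolding w_def using Gp[of "n+j"] Kn[of "n+j" n] by simp
    have yn: "0 \<le> y j" for j unfolding y_def by (rule xn)
    have "G' n > 0" using geo_pos[of "m * s"] m s by (simp add: G'_def)
    from jensen_psi[OF wn yn W this A B] show ?thesis .
  qed
  have Tp: "prob_dist (Tsg s p)" "finite_mean (Tsg s p)" using T_props[OF p, of s] s by auto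
  have "(\<Sum>n. G' n * psi (Tsg s p n / G' n)) \<le> (\<Sum>n. \<Sum>j. a (n + j) n)"
  proof (rule suminf_le[OF pt])
    show "summable (\<lambda>n. G' n * psi (Tsg s p n / G' n))"
      using ent_rel(1)[OF _ Tp, of "m * s"] m s by (simp add: G'_def)
    show "summable (\<lambda>n. \<Sum>j. a (n + j) n)" using TS by (simp add: sums_iff)
  qed
  also have "\<dots> = (\<Sum>k. G k * psi (x k))"
    using TS by (simp add: sums_iff rs)
  finally show ?thesis by (simp add: G_def G'_def x_def)
qed



definition gfun :: "real \<Rightarrow> real \<Rightarrow> real \<Rightarrow> real" where
  "gfun nn mu t = ln (nn * exp (- t) + 1) + mu * exp (- t) * ln (1 + exp t / nn)"

definition KLt :: "real \<Rightarrow> (nat \<Rightarrow> real) \<Rightarrow> real \<Rightarrow> real" where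
  "KLt nn p t = (\<Sum>n. geo_dist (nn * exp (- t)) n *
      psi (Tsg (exp (- t)) p n / geo_dist (nn * exp (- t)) n))"

lemma gfun_deriv:
  fixes nn mu :: real assumes "nn > 0"
  shows "(gfun nn mu has_real_derivative
     (- nn / (nn + 1) + mu * (1 / (nn + 1) - ln (1 + 1 / nn)))) (at 0)"
proof -
  have p1: "0 < nn * exp (- 0) + 1" using assms by simp
  have p2: "0 < 1 + exp 0 / nn" using assms by (simp add: add_pos_pos)
  show ?thesis unfolding gfun_def[abs_def]
    using assms p1 p2 by (auto intro!: derivative_eq_intros simp: field_simps)
qed

lemma ent_formula:
  assumes nn: "nn > 0" and p: "prob_dist p" "finite_mean p" and t: "t \<ge> 0"
  shows "entropy (death_semigroup t p) = - KLt nn p t + gfun nn (mean_N p) t"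
proof -
  define s where "s = exp (- t)"
  have s: "0 < s" "s \<le> 1" using t by (auto simp: s_def)
  have T: "prob_dist (Tsg s p)" "finite_mean (Tsg s p)" "mean_N (Tsg s p) = s * mean_N p"
    using T_props[OF p, of s] s by auto
  have ms: "nn * s > 0" using nn s by simp
  have "entropy (Tsg s p) = - KLt nn p t + ln (nn * s + 1) + (s * mean_N p) * ln (1 + 1 / (nn * s))"
    using ent_rel(2)[OF ms T(1,2)] T(3) by (simp add: KLt_def s_def)
  moreover have "1 / (nn * s) = exp t / nn" using nn by (simp add: s_def exp_minus field_simps)
  ultimately show ?thesis unfolding ds_eq gfun_def s_def[symmetric] by (simp add: mult_ac)
qed

lemma KL_mono:
  assumes nn: "nn > 0" and p: "prob_dist p" "finite_mean p" and t: "t \<ge> 0"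
  shows "KLt nn p t \<le> KLt nn p 0"
  using DP[OF nn _ _ p, of "exp (- t)"] t by (simp add: KLt_def T_one)

lemma KL_geo:
  assumes nn: "nn > 0" and t: "t \<ge> 0"
  shows "KLt nn (geo_dist nn) t = 0"
proof -
  have "Tsg (exp (- t)) (geo_dist nn) = geo_dist (nn * exp (- t))"
    using T_geo[OF nn, of "exp (- t)"] t by simp
  moreover have "geo_dist (nn * exp (- t)) n > 0" for n using geo_pos[of "nn * exp (- t)"] nn by simp
  hence "geo_dist (nn * exp (- t)) n \<noteq> 0" for n by (metis less_irrefl)
  ultimately show ?thesis unfolding KLt_def by (simp add: psi_one)
qed

lemma geo_mean:
  assumes nn: "nn > 0"
  shows "finite_mean (geo_dist nn) \<and> mean_N (geo_dist nn) = nn"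
proof -
  define r where "r = nn / (nn + 1)"
  have r: "0 < r" "r < 1" using nn by (auto simp: r_def field_simps)
  have "(\<lambda>n. real (Suc n) * r ^ Suc n) sums (r * (1 / (1 - r)^2))"
    using sums_mult[OF geometric_deriv_sums[of r], of r] r by (simp add: mult_ac)
  from sums_Suc[OF this] have "(\<lambda>n. real n * r ^ n) sums (r * (1 / (1 - r)^2))"
    by simp
  hence "(\<lambda>n. (1 - r) * (real n * r ^ n)) sums ((1 - r) * (r * (1 / (1 - r)^2)))"
    by (rule sums_mult)
  moreover have "(1 - r) * (r * (1 / (1 - r)^2)) = nn"
  proof -
    have c2: "a \<noteq> 0 \<Longrightarrow> a * (r * (1 / a^2)) = r / a" for a :: real
      by (simp add: power2_eq_square)
    have "(1 - r) * (r * (1 / (1 - r)^2)) = r / (1 - r)"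
      using r by (intro c2) simp
    moreover have "1 - r = 1 / (nn + 1)" using nn by (simp add: r_def field_simps)
    ultimately show ?thesis using nn by (simp add: r_def)
  qed
  ultimately have "(\<lambda>n. real n * geo_dist nn n) sums nn"
    unfolding geo_dist_def r_def[symmetric] by (simp add: mult_ac)
  thus ?thesis by (simp add: finite_mean_def mean_N_def sums_iff)
qed

lemma ln_bound: "(nn::real) > 0 \<Longrightarrow> 1 / (nn + 1) \<le> ln (1 + 1 / nn)"
proof -
  assume nn: "nn > 0"
  have "ln (nn / (nn + 1)) \<le> nn / (nn + 1) - 1" using ln_le_minus_one[of "nn / (nn + 1)"] nn by simp
  moreover have "ln (nn / (nn + 1)) = - ln (1 + 1 / nn)"
  proof -
    have "1 + 1 / nn = (nn + 1) / nn" using nn by (simp add: field_simps)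
    thus ?thesis using nn by (simp add: ln_divide_pos)
  qed
  moreover have "nn / (nn + 1) - 1 = - (1 / (nn + 1))" using nn by (simp add: field_simps)
  ultimately show ?thesis by linarith
qed

theorem theorem12:
  fixes nn :: real
  assumes "nn > 0"
  shows "prob_dist (geo_dist nn) \<and> finite_mean (geo_dist nn) \<and> mean_N (geo_dist nn) \<le> nn
     \<and> has_Jminus (geo_dist nn) (- 2 * nn * ln (1 + 1 / nn))
     \<and> (\<forall>p J. prob_dist p \<and> finite_mean p \<and> mean_N p \<le> nn \<and> has_Jminus p J
              \<longrightarrow> - 2 * nn * ln (1 + 1 / nn) \<le> J)"
proof (intro conjI allI impI)
  note nn = assms
  show gp: "prob_dist (geo_dist nn)" by (rule geo_prob[OF nn])
  show gm: "finite_mean (geo_dist nn)" using geo_mean[OF nn] by simp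
  show "mean_N (geo_dist nn) \<le> nn" using geo_mean[OF nn] by simp
  show "has_Jminus (geo_dist nn) (- 2 * nn * ln (1 + 1 / nn))"
  proof -
    have gd: "(gfun nn nn has_real_derivative - nn * ln (1 + 1 / nn)) (at_right 0)"
    proof -
      have "(gfun nn nn has_real_derivative
         (- nn / (nn + 1) + nn * (1 / (nn + 1) - ln (1 + 1 / nn)))) (at_right 0)"
        by (rule has_field_derivative_at_within[OF gfun_deriv[OF nn]])
      moreover have "- nn / (nn + 1) + nn * (1 / (nn + 1) - ln (1 + 1 / nn)) = - nn * ln (1 + 1 / nn)"
        by (simp add: field_simps)
      ultimately show ?thesis by simp
    qed
    have eq: "entropy (death_semigroup t (geo_dist nn)) = gfun nn nn t" if "t \<ge> 0" for t
      using ent_formula[OF nn gp gm that] KL_geo[OF nn that] geo_mean[OF nn] by simp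
    have ev: "eventually (\<lambda>t. entropy (death_semigroup t (geo_dist nn)) = gfun nn nn t) (at_right 0)"
      using eventually_at_right_less[of "0::real"] by eventually_elim (simp add: eq)
    show ?thesis unfolding has_Jminus_def
      using has_field_derivative_cong_eventually[OF ev eq[of 0]] gd by simp
  qed
next
  fix p J
  note nn = assms
  assume H: "prob_dist p \<and> finite_mean p \<and> mean_N p \<le> nn \<and> has_Jminus p J"
  hence p: "prob_dist p" "finite_mean p" and mle: "mean_N p \<le> nn" and hj: "has_Jminus p J" by auto
  define mu where "mu = mean_N p"
  have mu0: "0 \<le> mu" unfolding mu_def mean_N_def using p
    by (intro suminf_nonneg) (auto simp: finite_mean_def prob_dist_def)
  define f where "f = (\<lambda>t. entropy (death_semigroup t p))"
  define D where "D = - nn / (nn + 1) + mu * (1 / (nn + 1) - ln (1 + 1 / nn))"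
  have fd: "(f has_real_derivative J / 2) (at_right 0)" using hj by (simp add: has_Jminus_def f_def)
  have gd: "(gfun nn mu has_real_derivative D) (at_right 0)"
    unfolding D_def by (rule has_field_derivative_at_within[OF gfun_deriv[OF nn]])
  have hd: "((\<lambda>t. f t - gfun nn mu t) has_real_derivative (J / 2 - D)) (at_right 0)"
    by (rule DERIV_diff[OF fd gd])
  hence lim: "((\<lambda>y. ((f y - gfun nn mu y) - (f 0 - gfun nn mu 0)) / (y - 0)) \<longlongrightarrow> J / 2 - D) (at_right 0)"
    by (simp add: has_field_derivative_iff)
  have "eventually (\<lambda>y. 0 \<le> ((f y - gfun nn mu y) - (f 0 - gfun nn mu 0)) / (y - 0)) (at_right 0)"
    using eventually_at_right_less[of "0::real"]
  proof eventually_elim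
    case (elim y)
    have "f y - gfun nn mu y = - KLt nn p y" using ent_formula[OF nn p, of y] elim by (simp add: f_def mu_def)
    moreover have "f 0 - gfun nn mu 0 = - KLt nn p 0" using ent_formula[OF nn p, of 0] by (simp add: f_def mu_def)
    moreover have "KLt nn p y \<le> KLt nn p 0" using KL_mono[OF nn p, of y] elim by simp
    ultimately show ?case using elim by simp
  qed
  hence "0 \<le> J / 2 - D" by (intro tendsto_lowerbound[OF lim]) simp_all
  moreover have "- nn * ln (1 + 1 / nn) \<le> D"
  proof -
    define c where "c = 1 / (nn + 1)"
    define L where "L = ln (1 + 1 / nn)"
    have "(nn - mu) * c \<le> (nn - mu) * L"
      using mle ln_bound[OF nn] by (intro mult_left_mono) (auto simp: mu_def c_def L_def)
    hence h: "nn * c - mu * c \<le> nn * L - mu * L" by (simp add: algebra_simps)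
    have "D = - (nn * c) + (mu * c - mu * L)" unfolding D_def c_def L_def
      by (simp add: right_diff_distrib)
    thus ?thesis using h by (simp add: L_def)
  qed
  ultimately show "- 2 * nn * ln (1 + 1 / nn) \<le> J" by simp
qed


end
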